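(* Let $i=1$ if $\Phi$ is of type $\mathsf{E}_6$ and $i=7$ if $\Phi$ is of type $\mathsf{E}_7$, and let $W_i$ be the subgroup of the Weyl group $W$ generated by $S\setminus\{s_i\}$. Then for every $\alpha\in\Phi$, the reflection $s_\alpha$ lies in $W_i\cup W_is_iW_i$.
   Context: Bourbaki labelling of simple roots $\alpha_1,\dots,\alpha_n$, $s_j$ the simple reflection in $\alpha_j$, $S=\{s_1,\dots,s_n\}$, and $s_\alpha$ the reflection in the root $\alpha$. *)

theory Defs
  imports Main
begin

text \<open>Root systems of type E_n (n = 6, 7), Bourbaki labelling: Dynkin diagram
  1 - 3 - 4 - 5 - 6 - 7 with node 2 attached to node 4.
  Vectors of the root lattice are written in coordinates w.r.t. the simple roots
  alpha_1..alpha_n, as functions nat => int (coordinates outside 1..n are inert).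
  The (simply-laced) invariant form is given by the Cartan matrix.\<close>

definition E_adj :: "nat \<Rightarrow> nat \<Rightarrow> bool" where
  "E_adj k l \<longleftrightarrow> {k, l} \<in> {{1,3}, {3,4}, {4,5}, {5,6}, {6,7}, {2,4}}"

definition cartanE :: "nat \<Rightarrow> nat \<Rightarrow> int" where
  "cartanE k l = (if k = l then 2 else if E_adj k l then -1 else 0)"

definition bilE :: "nat \<Rightarrow> (nat \<Rightarrow> int) \<Rightarrow> (nat \<Rightarrow> int) \<Rightarrow> int" where
  "bilE n v w = (\<Sum>k\<in>{1..n}. \<Sum>l\<in>{1..n}. v k * cartanE k l * w l)"

text \<open>Reflection s_alpha in a root alpha (with (alpha,alpha) = 2).\<close>
definition reflE :: "nat \<Rightarrow> (nat \<Rightarrow> int) \<Rightarrow> (nat \<Rightarrow> int) \<Rightarrow> (nat \<Rightarrow> int)" where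
  "reflE n \<alpha> = (\<lambda>v k. v k - bilE n v \<alpha> * \<alpha> k)"

definition simple_root :: "nat \<Rightarrow> nat \<Rightarrow> int" where
  "simple_root j = (\<lambda>k. if k = j then 1 else 0)"

definition sE :: "nat \<Rightarrow> nat \<Rightarrow> (nat \<Rightarrow> int) \<Rightarrow> (nat \<Rightarrow> int)" where
  "sE n j = reflE n (simple_root j)"

text \<open>Subgroup of the Weyl group generated by {s_j | j \<in> J}
  (the s_j are involutions, so closure under composition gives the group).\<close>
inductive_set genW :: "nat \<Rightarrow> nat set \<Rightarrow> ((nat \<Rightarrow> int) \<Rightarrow> (nat \<Rightarrow> int)) set"
  for n :: nat and J :: "nat set" where
  genW_id: "id \<in> genW n J"
| genW_step: "w \<in> genW n J \<Longrightarrow> j \<in> J \<Longrightarrow> sE n j \<circ> w \<in> genW n J"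

definition WeylE :: "nat \<Rightarrow> ((nat \<Rightarrow> int) \<Rightarrow> (nat \<Rightarrow> int)) set" where
  "WeylE n = genW n {1..n}"

definition rootsE :: "nat \<Rightarrow> (nat \<Rightarrow> int) set" where
  "rootsE n = {w (simple_root j) | w j. w \<in> WeylE n \<and> j \<in> {1..n}}"

end

theory Submission
  imports Defs
begin

definition adjL :: "nat \<Rightarrow> nat \<Rightarrow> bool" where
  "adjL k l \<longleftrightarrow> (k,l) \<in> set [(1,3),(3,1),(3,4),(4,3),(4,5),(5,4),(5,6),(6,5),(6,7),(7,6),(2,4),(4,2)]"

lemma E_adj_adjL: "E_adj k l = adjL k l"
  unfolding E_adj_def adjL_def by (auto simp: doubleton_eq_iff)

definition vecL :: "nat \<Rightarrow> int list \<Rightarrow> nat \<Rightarrow> int" where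
  "vecL n xs = (\<lambda>k. if 1 \<le> k \<and> k \<le> n then xs ! (k - 1) else 0)"

definition sL :: "nat \<Rightarrow> nat \<Rightarrow> int list \<Rightarrow> int list" where
  "sL n j xs = xs[j - 1 := sum_list (map (\<lambda>l. if adjL l j then xs ! (l - 1) else 0) [1..<Suc n]) - xs ! (j - 1)]"

definition unitL :: "nat \<Rightarrow> nat \<Rightarrow> int list" where
  "unitL n j = map (\<lambda>k. if k = j then 1 else 0) [1..<Suc n]"

definition wordL :: "nat \<Rightarrow> nat list \<Rightarrow> int list \<Rightarrow> int list" where
  "wordL n ws xs = foldr (sL n) ws xs"

definition wordE :: "nat \<Rightarrow> nat list \<Rightarrow> (nat \<Rightarrow> int) \<Rightarrow> (nat \<Rightarrow> int)" where
  "wordE n ws = foldr (\<lambda>j f. sE n j \<circ> f) ws id"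

lemma bil_simple: assumes "j \<in> {1..n}"
  shows "bilE n v (simple_root j) = (\<Sum>k\<in>{1..n}. v k * cartanE k j)"
  unfolding bilE_def simple_root_def
  by (rule sum.cong[OF refl]) (use assms in \<open>simp add: if_distrib cong: if_cong\<close>)

lemma adj_irr: "\<not> adjL j j" by (auto simp: adjL_def)

lemma bil_simple2: assumes "j \<in> {1..n}"
  shows "bilE n v (simple_root j) = 2 * v j - (\<Sum>k\<in>{1..n}. if adjL k j then v k else 0)"
proof -
  have "\<And>k. v k * cartanE k j = (if k = j then 2 * v k else 0) - (if adjL k j then v k else 0)"
    using adj_irr by (auto simp: cartanE_def E_adj_adjL)
  then show ?thesis using assms
    by (simp add: bil_simple sum_subtractf)
qed

lemma sum_upt_conv: "(\<Sum>k\<in>{1..n}. f k) = sum_list (map f [1..<Suc n])"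
proof -
  have "{1..n} = set [1..<Suc n]" by auto
  then show ?thesis by (simp add: sum_list_distinct_conv_sum_set)
qed

lemma sE_vec: assumes "length xs = n" "j \<in> {1..n}"
  shows "sE n j (vecL n xs) = vecL n (sL n j xs)"
proof (rule ext)
  fix k
  have s: "(\<Sum>k\<in>{1..n}. if adjL k j then vecL n xs k else 0)
      = sum_list (map (\<lambda>l. if adjL l j then xs ! (l - 1) else 0) [1..<Suc n])"
    unfolding sum_upt_conv by (rule arg_cong[where f=sum_list], rule map_cong) (auto simp: vecL_def)
  show "sE n j (vecL n xs) k = vecL n (sL n j xs) k"
    unfolding sE_def reflE_def bil_simple2[OF assms(2)] s using assms
    by (auto simp add: simple_root_def vecL_def sL_def nth_list_update)
qed

lemma sL_len: "length (sL n j xs) = length xs" by (simp add: sL_def)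

lemma wordL_len: "length (wordL n ws xs) = length xs"
  by (induction ws) (auto simp: wordL_def sL_len)

lemma wordE_vec: assumes "length xs = n" "set ws \<subseteq> {1..n}"
  shows "wordE n ws (vecL n xs) = vecL n (wordL n ws xs)"
  using assms(2)
proof (induction ws)
  case Nil then show ?case by (simp add: wordE_def wordL_def)
next
  case (Cons j ws)
  have "length (wordL n ws xs) = n" using assms(1) by (simp add: wordL_len)
  with Cons show ?case by (simp add: wordE_def wordL_def sE_vec)
qed

lemma unit_vec: assumes "j \<in> {1..n}" shows "simple_root j = vecL n (unitL n j)"
proof (rule ext)
  fix k show "simple_root j k = vecL n (unitL n j) k"
    using assms by (auto simp: simple_root_def vecL_def unitL_def simp del: upt_Suc)
qed

lemma wordE_genW: "set ws \<subseteq> J \<Longrightarrow> wordE n ws \<in> genW n J"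
  by (induction ws) (auto simp: wordE_def intro: genW.intros)

lemma wordE_append: "wordE n (ws @ vs) = wordE n ws \<circ> wordE n vs"
  by (induction ws) (auto simp: wordE_def)

lemma bil_lin1: "bilE n (\<lambda>k. v k - c * a k) w = bilE n v w - c * bilE n a w"
  unfolding bilE_def by (simp add: algebra_simps sum_subtractf sum_distrib_left)

lemma bil_lin2: "bilE n w (\<lambda>k. v k - c * a k) = bilE n w v - c * bilE n w a"
  unfolding bilE_def by (simp add: algebra_simps sum_subtractf sum_distrib_left)

lemma cartan_sym: "cartanE k l = cartanE l k"
  unfolding cartanE_def E_adj_def by (simp add: insert_commute)

lemma bil_sym: "bilE n v w = bilE n w v"
  unfolding bilE_def
  by (subst sum.swap) (simp add: cartan_sym mult.commute mult.left_commute)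

lemma refl_conj: assumes "bilE n a a = 2"
  shows "reflE n (reflE n a b) = reflE n a \<circ> reflE n b \<circ> reflE n a"
proof (rule ext, rule ext)
  fix v k
  have sy: "bilE n b a = bilE n a b" by (rule bil_sym)
  show "reflE n (reflE n a b) v k = (reflE n a \<circ> reflE n b \<circ> reflE n a) v k"
    unfolding reflE_def comp_def
    by (simp add: bil_lin1 bil_lin2 assms sy) (simp add: algebra_simps)
qed

lemma bil_simple_self: assumes "j \<in> {1..n}" shows "bilE n (simple_root j) (simple_root j) = 2"
proof -
  have "\<And>k. simple_root j k * cartanE k j = (if k = j then 2 else 0)"
    by (simp add: simple_root_def cartanE_def)
  then show ?thesis using assms by (simp add: bil_simple[OF assms])
qed

lemma sE_conj: "j \<in> {1..n} \<Longrightarrow> reflE n (sE n j b) = sE n j \<circ> reflE n b \<circ> sE n j"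
  unfolding sE_def by (rule refl_conj[OF bil_simple_self])

lemma wordE_Cons: "wordE n (j # ws) = sE n j \<circ> wordE n ws"
  by (simp add: wordE_def)

lemma wordE_single: "wordE n [j] = sE n j"
  by (simp add: wordE_def)

lemma wordE_Nil: "wordE n [] = id"
  by (simp add: wordE_def)

lemma wordE_conj: "set ws \<subseteq> {1..n} \<Longrightarrow>
    reflE n (wordE n ws b) = wordE n ws \<circ> reflE n b \<circ> wordE n (rev ws)"
proof (induction ws)
  case Nil then show ?case by (simp add: wordE_def)
next
  case (Cons j ws)
  then have j: "j \<in> {1..n}" and IH: "reflE n (wordE n ws b) = wordE n ws \<circ> reflE n b \<circ> wordE n (rev ws)"
    by auto
  have "reflE n (wordE n (j # ws) b) = sE n j \<circ> reflE n (wordE n ws b) \<circ> sE n j"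
    by (simp only: wordE_Cons comp_apply sE_conj[OF j])
  also have "\<dots> = wordE n (j # ws) \<circ> reflE n b \<circ> wordE n (rev (j # ws))"
    unfolding IH wordE_Cons rev.simps wordE_append wordE_Nil by (simp add: comp_assoc)
  finally show ?case .
qed

lemma refl_neg: "reflE n (\<lambda>k. - a k) = reflE n a"
proof -
  have "bilE n v (\<lambda>k. - a k) = - bilE n v a" for v
    unfolding bilE_def by (simp add: sum_negf)
  then show ?thesis unfolding reflE_def by auto
qed

lemma vec_neg: "length xs = n \<Longrightarrow> vecL n (map uminus xs) = (\<lambda>k. - vecL n xs k)"
  by (auto simp: vecL_def fun_eq_iff)

datatype tag = Base nat bool | Step nat nat

definition rootL6 :: "int list list" where "rootL6 = [[1,0,0,0,0,0], [-1,0,0,0,0,0], [0,1,0,0,0,0], [0,-1,0,0,0,0], [0,0,1,0,0,0], [0,0,-1,0,0,0], [0,0,0,1,0,0], [0,0,0,-1,0,0], [0,0,0,0,1,0], [0,0,0,0,-1,0], [0,0,0,0,0,1], [0,0,0,0,0,-1], [1,0,1,0,0,0], [-1,0,-1,0,0,0], [0,1,0,1,0,0], [0,-1,0,-1,0,0], [0,0,1,1,0,0], [0,0,-1,-1,0,0], [0,0,0,1,1,0], [0,0,0,-1,-1,0], [0,0,0,0,1,1], [0,0,0,0,-1,-1], [1,0,1,1,0,0], [-1,0,-1,-1,0,0], [0,1,1,1,0,0], [0,1,0,1,1,0], [0,-1,-1,-1,0,0], [0,-1,0,-1,-1,0], [0,0,1,1,1,0], [0,0,-1,-1,-1,0], [0,0,0,1,1,1],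 [0,0,0,-1,-1,-1], [1,1,1,1,0,0], [1,0,1,1,1,0], [-1,-1,-1,-1,0,0], [-1,0,-1,-1,-1,0], [0,1,1,1,1,0], [0,1,0,1,1,1], [0,-1,-1,-1,-1,0], [0,-1,0,-1,-1,-1], [0,0,1,1,1,1], [0,0,-1,-1,-1,-1], [1,1,1,1,1,0], [1,0,1,1,1,1], [-1,-1,-1,-1,-1,0], [-1,0,-1,-1,-1,-1], [0,1,1,2,1,0], [0,1,1,1,1,1], [0,-1,-1,-2,-1,0], [0,-1,-1,-1,-1,-1], [1,1,1,2,1,0], [1,1,1,1,1,1], [-1,-1,-1,-2,-1,0], [-1,-1,-1,-1,-1,-1], [0,1,1,2,1,1], [0,-1,-1,-2,-1,-1], [1,1,2,2,1,0], [1,1,1,2,1,1], [-1,-1,-2,-2,-1,0], [-1,-1,-1,-2,-1,-1], [0,1,1,2,2,1], [0,-1,-1,-2,-2,-1], [1,1,2,2,1,1], [1,1,1,2,2,1], [-1,-1,-2,-2,-1,-1], [-1,-1,-1,-2,-2,-1], [1,1,2,2,2,1], [-1,-1,-2,-2,-2,-1], [1,1,2,3,2,1], [-1,-1,-2,-3,-2,-1], [1,2,2,3,2,1], [-1,-2,-2,-3,-2,-1]]"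

definition tagL6 :: "tag list" where "tagL6 = [(Base 1 True), (Base 1 False), (Base 2 True), (Base 2 False), (Base 3 True), (Base 3 False), (Base 4 True), (Base 4 False), (Base 5 True), (Base 5 False), (Base 6 True), (Base 6 False), (Step 0 3), (Step 1 3), (Step 2 4), (Step 3 4), (Step 4 4), (Step 5 4), (Step 6 5), (Step 7 5), (Step 8 6), (Step 9 6), (Step 12 4), (Step 13 4), (Step 14 3), (Step 14 5), (Step 15 3), (Step 15 5), (Step 16 5), (Step 17 5), (Step 18 6), (Step 19 6), (Step 22 2), (Step 22 5), (Step 23 2), (Step 23 5), (Step 24 5), (Step 25 6), (Step 26 5), (Step 27 6), (Step 28 6), (Step 29 6), (Step 32 5), (Step 33 6), (Step 34 5), (Step 35 6), (Step 36 4), (Step 36 6), (Step 38 4), (Step 38 6), (Step 42 4), (Step 42 6), (Step 44 4), (Step 44 6), (Step 46 6), (Step 48 6), (Step 50 3), (Step 50 6), (Step 52 3), (Step 52 6), (Step 54 5), (Step 55 5), (Step 56 6), (Step 57 5), (Step 58 6), (Step 59 5), (Step 62 5), (Step 64 5), (Step 66 4), (Step 67 4), (Step 68 2), (Step 69 2)]"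

definition rootL7 :: "int list list" where "rootL7 = [[1,0,0,0,0,0,0], [-1,0,0,0,0,0,0], [0,1,0,0,0,0,0], [0,-1,0,0,0,0,0], [0,0,1,0,0,0,0], [0,0,-1,0,0,0,0], [0,0,0,1,0,0,0], [0,0,0,-1,0,0,0], [0,0,0,0,1,0,0], [0,0,0,0,-1,0,0], [0,0,0,0,0,1,0], [0,0,0,0,0,-1,0], [0,0,0,0,0,0,1], [0,0,0,0,0,0,-1], [1,0,1,0,0,0,0], [-1,0,-1,0,0,0,0], [0,1,0,1,0,0,0], [0,-1,0,-1,0,0,0], [0,0,1,1,0,0,0], [0,0,-1,-1,0,0,0], [0,0,0,1,1,0,0], [0,0,0,-1,-1,0,0], [0,0,0,0,1,1,0], [0,0,0,0,-1,-1,0], [0,0,0,0,0,1,1], [0,0,0,0,0,-1,-1], [1,0,1,1,0,0,0], [-1,0,-1,-1,0,0,0], [0,1,1,1,0,0,0], [0,1,0,1,1,0,0], [0,-1,-1,-1,0,0,0], [0,-1,0,-1,-1,0,0], [0,0,1,1,1,0,0], [0,0,-1,-1,-1,0,0], [0,0,0,1,1,1,0], [0,0,0,-1,-1,-1,0], [0,0,0,0,1,1,1], [0,0,0,0,-1,-1,-1], [1,1,1,1,0,0,0], [1,0,1,1,1,0,0], [-1,-1,-1,-1,0,0,0], [-1,0,-1,-1,-1,0,0], [0,1,1,1,1,0,0], [0,1,0,1,1,1,0], [0,-1,-1,-1,-1,0,0], [0,-1,0,-1,-1,-1,0], [0,0,1,1,1,1,0], [0,0,-1,-1,-1,-1,0],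 [0,0,0,1,1,1,1], [0,0,0,-1,-1,-1,-1], [1,1,1,1,1,0,0], [1,0,1,1,1,1,0], [-1,-1,-1,-1,-1,0,0], [-1,0,-1,-1,-1,-1,0], [0,1,1,2,1,0,0], [0,1,1,1,1,1,0], [0,-1,-1,-2,-1,0,0], [0,-1,-1,-1,-1,-1,0], [0,1,0,1,1,1,1], [0,0,1,1,1,1,1], [0,-1,0,-1,-1,-1,-1], [0,0,-1,-1,-1,-1,-1], [1,1,1,2,1,0,0], [1,1,1,1,1,1,0], [-1,-1,-1,-2,-1,0,0], [-1,-1,-1,-1,-1,-1,0], [0,1,1,2,1,1,0], [0,-1,-1,-2,-1,-1,0], [0,1,1,1,1,1,1], [1,0,1,1,1,1,1], [0,-1,-1,-1,-1,-1,-1], [-1,0,-1,-1,-1,-1,-1], [1,1,2,2,1,0,0], [1,1,1,2,1,1,0], [-1,-1,-2,-2,-1,0,0], [-1,-1,-1,-2,-1,-1,0], [0,1,1,2,2,1,0], [0,-1,-1,-2,-2,-1,0], [1,1,1,1,1,1,1], [0,1,1,2,1,1,1], [-1,-1,-1,-1,-1,-1,-1], [0,-1,-1,-2,-1,-1,-1], [1,1,2,2,1,1,0], [1,1,1,2,2,1,0], [-1,-1,-2,-2,-1,-1,0], [-1,-1,-1,-2,-2,-1,0], [1,1,1,2,1,1,1], [0,1,1,2,2,1,1], [-1,-1,-1,-2,-1,-1,-1], [0,-1,-1,-2,-2,-1,-1], [1,1,2,2,2,1,0], [-1,-1,-2,-2,-2,-1,0], [1,1,2,2,1,1,1], [1,1,1,2,2,1,1],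 [0,1,1,2,2,2,1], [-1,-1,-2,-2,-1,-1,-1], [-1,-1,-1,-2,-2,-1,-1], [0,-1,-1,-2,-2,-2,-1], [1,1,2,3,2,1,0], [-1,-1,-2,-3,-2,-1,0], [1,1,2,2,2,1,1], [1,1,1,2,2,2,1], [-1,-1,-2,-2,-2,-1,-1], [-1,-1,-1,-2,-2,-2,-1], [1,2,2,3,2,1,0], [-1,-2,-2,-3,-2,-1,0], [1,1,2,3,2,1,1], [1,1,2,2,2,2,1], [-1,-1,-2,-3,-2,-1,-1], [-1,-1,-2,-2,-2,-2,-1], [1,2,2,3,2,1,1], [1,1,2,3,2,2,1], [-1,-2,-2,-3,-2,-1,-1], [-1,-1,-2,-3,-2,-2,-1], [1,2,2,3,2,2,1], [1,1,2,3,3,2,1], [-1,-2,-2,-3,-2,-2,-1], [-1,-1,-2,-3,-3,-2,-1], [1,2,2,3,3,2,1], [-1,-2,-2,-3,-3,-2,-1], [1,2,2,4,3,2,1], [-1,-2,-2,-4,-3,-2,-1], [1,2,3,4,3,2,1], [-1,-2,-3,-4,-3,-2,-1], [2,2,3,4,3,2,1], [-2,-2,-3,-4,-3,-2,-1]]"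

definition tagL7 :: "tag list" where "tagL7 = [(Base 1 True), (Base 1 False), (Base 2 True), (Base 2 False), (Base 3 True), (Base 3 False), (Base 4 True), (Base 4 False), (Base 5 True), (Base 5 False), (Base 6 True), (Base 6 False), (Base 7 True), (Base 7 False), (Step 0 3), (Step 1 3), (Step 2 4), (Step 3 4), (Step 4 4), (Step 5 4), (Step 6 5), (Step 7 5), (Step 8 6), (Step 9 6), (Step 12 6), (Step 13 6), (Step 14 4), (Step 15 4), (Step 16 3), (Step 16 5), (Step 17 3), (Step 17 5), (Step 18 5), (Step 19 5), (Step 20 6), (Step 21 6), (Step 24 5), (Step 25 5), (Step 26 2), (Step 26 5), (Step 27 2), (Step 27 5), (Step 28 5), (Step 29 6), (Step 30 5), (Step 31 6), (Step 32 6), (Step 33 6), (Step 36 4), (Step 37 4), (Step 38 5), (Step 39 6), (Step 40 5), (Step 41 6), (Step 42 4), (Step 42 6), (Step 44 4), (Step 44 6), (Step 48 2), (Step 48 3), (Step 49 2), (Step 49 3), (Step 50 4), (Step 50 6), (Step 52 4), (Step 52 6), (Step 54 6), (Step 56 6), (Step 58 3), (Step 59 1), (Step 60 3), (Step 61 1), (Step 62 3), (Step 62 6), (Step 64 3), (Step 64 6), (Step 66 5), (Step 67 5), (Step 68 1), (Step 68 4), (Step 70 1), (Step 70 4), (Step 72 6), (Step 73 5), (Step 74 6), (Step 75 5), (Step 78 4), (Step 79 5), (Step 80 4), (Step 81 5), (Step 82 5), (Step 84 5), (Step 86 3), (Step 86 5), (Step 87 6), (Step 88 3), (Step 88 5),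 (Step 89 6), (Step 90 4), (Step 91 4), (Step 92 5), (Step 93 6), (Step 95 5), (Step 96 6), (Step 98 2), (Step 99 2), (Step 100 4), (Step 100 6), (Step 102 4), (Step 102 6), (Step 106 2), (Step 106 6), (Step 108 2), (Step 108 6), (Step 110 6), (Step 111 5), (Step 112 6), (Step 113 5), (Step 114 5), (Step 116 5), (Step 118 4), (Step 119 4), (Step 120 3), (Step 121 3), (Step 122 1), (Step 123 1)]"

lemma roots_in:
  assumes len: "\<forall>x\<in>set R. length x = n"
    and closed: "\<forall>x\<in>set R. \<forall>j\<in>{1..n}. sL n j x \<in> set R"
    and units: "\<forall>j\<in>{1..n}. unitL n j \<in> set R"
    and w: "w \<in> genW n {1..n}"
  shows "\<forall>j\<in>{1..n}. \<exists>x\<in>set R. w (simple_root j) = vecL n x"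
  using w
proof (induction rule: genW.induct)
  case genW_id
  show ?case
  proof
    fix j assume j: "j \<in> {1..n}"
    show "\<exists>x\<in>set R. id (simple_root j) = vecL n x"
      by (rule bexI[of _ "unitL n j"]) (use units j unit_vec[OF j] in auto)
  qed
next
  case (genW_step w j)
  show ?case
  proof
    fix k assume k: "k \<in> {1..n}"
    then obtain x where x: "x \<in> set R" "w (simple_root k) = vecL n x" using genW_step by blast
    then have "(sE n j \<circ> w) (simple_root k) = vecL n (sL n j x)"
      using sE_vec len genW_step by auto
    then show "\<exists>x\<in>set R. (sE n j \<circ> w) (simple_root k) = vecL n x"
      using closed x genW_step by blast
  qed
qed

lemma main_gen:
  assumes len: "\<forall>x\<in>set R. length x = n"
    and closed: "\<forall>x\<in>set R. \<forall>j\<in>{1..n}. sL n j x \<in> set R"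
    and units: "\<forall>j\<in>{1..n}. unitL n j \<in> set R"
    and wit: "\<forall>x\<in>set R. \<exists>ws j b. set ws \<subseteq> {1..n} - {i} \<and> j \<in> {1..n} \<and>
        x = wordL n ws (if b then unitL n j else map uminus (unitL n j))"
    and a: "\<alpha> \<in> rootsE n"
  shows "reflE n \<alpha> \<in> genW n ({1..n} - {i}) \<union>
           {u \<circ> sE n i \<circ> v | u v. u \<in> genW n ({1..n} - {i}) \<and> v \<in> genW n ({1..n} - {i})}"
proof -
  obtain w j0 where w: "w \<in> genW n {1..n}" "j0 \<in> {1..n}" "\<alpha> = w (simple_root j0)"
    using a unfolding rootsE_def WeylE_def by blast
  then obtain x where x: "x \<in> set R" "\<alpha> = vecL n x"
    using roots_in[OF len closed units w(1)] by blast
  then obtain ws j b where wj: "set ws \<subseteq> {1..n} - {i}" "j \<in> {1..n}"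
    "x = wordL n ws (if b then unitL n j else map uminus (unitL n j))"
    using wit by blast
  have ws1: "set ws \<subseteq> {1..n}" using wj by auto
  define u where "u = (if b then unitL n j else map uminus (unitL n j))"
  have lu: "length u = n" by (simp add: unitL_def u_def)
  have vy: "\<alpha> = wordE n ws (vecL n u)"
    using wordE_vec[OF lu ws1] x wj u_def by simp
  have ru: "reflE n (vecL n u) = sE n j"
  proof (cases b)
    case True then show ?thesis using unit_vec[OF wj(2)] by (simp add: u_def sE_def)
  next
    case False
    have "vecL n u = (\<lambda>k. - simple_root j k)"
      using False unit_vec[OF wj(2)] vec_neg[of "unitL n j" n] by (simp add: u_def unitL_def)
    then show ?thesis using refl_neg by (simp add: sE_def)
  qed
  have "reflE n \<alpha> = reflE n (wordE n ws (vecL n u))" using vy by simp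
  also have "\<dots> = wordE n ws \<circ> sE n j \<circ> wordE n (rev ws)"
    using wordE_conj[OF ws1] ru by simp
  finally have r: "reflE n \<alpha> = wordE n ws \<circ> sE n j \<circ> wordE n (rev ws)" .
  have g1: "wordE n ws \<in> genW n ({1..n} - {i})" "wordE n (rev ws) \<in> genW n ({1..n} - {i})"
    using wordE_genW wj(1) by auto
  show ?thesis
  proof (cases "j = i")
    case True then show ?thesis using r g1 by blast
  next
    case False
    have "wordE n (ws @ [j] @ rev ws) \<in> genW n ({1..n} - {i})"
      using wordE_genW wj False by auto
    moreover have "wordE n (ws @ [j] @ rev ws) = wordE n ws \<circ> sE n j \<circ> wordE n (rev ws)"
      by (simp add: wordE_append wordE_Cons wordE_Nil comp_assoc)
    ultimately show ?thesis using r by simp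
  qed
qed

definition okT :: "nat \<Rightarrow> nat \<Rightarrow> int list list \<Rightarrow> nat \<Rightarrow> int list \<Rightarrow> tag \<Rightarrow> bool" where
  "okT n i R idx x t = (case t of
      Base j b \<Rightarrow> 1 \<le> j \<and> j \<le> n \<and> x = (if b then unitL n j else map uminus (unitL n j))
    | Step k j' \<Rightarrow> k < idx \<and> 1 \<le> j' \<and> j' \<le> n \<and> j' \<noteq> i \<and> x = sL n j' (R ! k))"

definition witOK :: "nat \<Rightarrow> nat \<Rightarrow> int list list \<Rightarrow> tag list \<Rightarrow> bool" where
  "witOK n i R T = (length T = length R \<and> list_all (\<lambda>idx. okT n i R idx (R ! idx) (T ! idx)) [0..<length R])"

lemma witOK_imp:
  assumes "witOK n i R T"
  shows "\<forall>x\<in>set R. \<exists>ws j b. set ws \<subseteq> {1..n} - {i} \<and> j \<in> {1..n} \<and>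
        x = wordL n ws (if b then unitL n j else map uminus (unitL n j))"
proof -
  have ok: "\<And>idx. idx < length R \<Longrightarrow> okT n i R idx (R ! idx) (T ! idx)"
    using assms unfolding witOK_def list_all_iff by auto
  have "\<exists>ws j b. set ws \<subseteq> {1..n} - {i} \<and> j \<in> {1..n} \<and>
        R ! idx = wordL n ws (if b then unitL n j else map uminus (unitL n j))" if "idx < length R" for idx
    using that
  proof (induction idx rule: less_induct)
    case (less idx)
    show ?case
    proof (cases "T ! idx")
      case (Base j b)
      then have "1 \<le> j \<and> j \<le> n \<and> R ! idx = (if b then unitL n j else map uminus (unitL n j))"
        using ok[OF less.prems] by (simp add: okT_def)
      then show ?thesis
        by (intro exI[of _ "[]"] exI[of _ j] exI[of _ b]) (simp add: wordL_def)
    next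
      case (Step k j')
      then have h: "k < idx" "1 \<le> j'" "j' \<le> n" "j' \<noteq> i" "R ! idx = sL n j' (R ! k)"
        using ok[OF less.prems] by (simp_all add: okT_def)
      then obtain ws j b where w: "set ws \<subseteq> {1..n} - {i}" "j \<in> {1..n}"
        "R ! k = wordL n ws (if b then unitL n j else map uminus (unitL n j))"
        using less.IH[of k] less.prems by auto
      show ?thesis
      proof (intro exI[of _ "j' # ws"] exI[of _ j] exI[of _ b] conjI)
        show "set (j' # ws) \<subseteq> {1..n} - {i}" using w h by auto
        show "j \<in> {1..n}" by (rule w(2))
        show "R ! idx = wordL n (j' # ws) (if b then unitL n j else map uminus (unitL n j))"
          using h(5) w(3) by (simp add: wordL_def)
      qed
    qed
  qed
  then show ?thesis by (metis in_set_conv_nth)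
qed

lemma closed_iff: "(\<forall>x\<in>set R. \<forall>j\<in>{1..n}. sL n j x \<in> set R) \<longleftrightarrow>
   list_all (\<lambda>x. list_all (\<lambda>j. sL n j x \<in> set R) [1..<Suc n]) R"
  unfolding list_all_iff set_upt atLeastLessThanSuc_atLeastAtMost ..

lemma units_iff: "(\<forall>j\<in>{1..n}. unitL n j \<in> set R) \<longleftrightarrow> list_all (\<lambda>j. unitL n j \<in> set R) [1..<Suc n]"
  unfolding list_all_iff set_upt atLeastLessThanSuc_atLeastAtMost ..

lemma len_iff: "(\<forall>x\<in>set R. length x = n) \<longleftrightarrow> list_all (\<lambda>x. length x = n) R"
  by (auto simp: list_all_iff)

lemma c6a: "list_all (\<lambda>x. length x = 6) rootL6" by code_simp
lemma c6b1: "list_all (\<lambda>x. sL 6 1 x \<in> set rootL6) rootL6" by code_simp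
lemma c6b2: "list_all (\<lambda>x. sL 6 2 x \<in> set rootL6) rootL6" by code_simp
lemma c6b3: "list_all (\<lambda>x. sL 6 3 x \<in> set rootL6) rootL6" by code_simp
lemma c6b4: "list_all (\<lambda>x. sL 6 4 x \<in> set rootL6) rootL6" by code_simp
lemma c6b5: "list_all (\<lambda>x. sL 6 5 x \<in> set rootL6) rootL6" by code_simp
lemma c6b6: "list_all (\<lambda>x. sL 6 6 x \<in> set rootL6) rootL6" by code_simp
lemma c6b: "list_all (\<lambda>x. list_all (\<lambda>j. sL 6 j x \<in> set rootL6) [1..<Suc 6]) rootL6"
  using c6b1 c6b2 c6b3 c6b4 c6b5 c6b6 by (simp add: upt_rec list_all_iff numeral_eq_Suc ball_conj_distrib)
lemma c6c: "list_all (\<lambda>j. unitL 6 j \<in> set rootL6) [1..<Suc 6]" by code_simp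
lemma c6d: "witOK 6 1 rootL6 tagL6" by code_simp
lemma c7a: "list_all (\<lambda>x. length x = 7) rootL7" by code_simp
lemma c7b1: "list_all (\<lambda>x. sL 7 1 x \<in> set rootL7) rootL7" by code_simp
lemma c7b2: "list_all (\<lambda>x. sL 7 2 x \<in> set rootL7) rootL7" by code_simp
lemma c7b3: "list_all (\<lambda>x. sL 7 3 x \<in> set rootL7) rootL7" by code_simp
lemma c7b4: "list_all (\<lambda>x. sL 7 4 x \<in> set rootL7) rootL7" by code_simp
lemma c7b5: "list_all (\<lambda>x. sL 7 5 x \<in> set rootL7) rootL7" by code_simp
lemma c7b6: "list_all (\<lambda>x. sL 7 6 x \<in> set rootL7) rootL7" by code_simp
lemma c7b7: "list_all (\<lambda>x. sL 7 7 x \<in> set rootL7) rootL7" by code_simp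
lemma c7b: "list_all (\<lambda>x. list_all (\<lambda>j. sL 7 j x \<in> set rootL7) [1..<Suc 7]) rootL7"
  using c7b1 c7b2 c7b3 c7b4 c7b5 c7b6 c7b7 by (simp add: upt_rec list_all_iff numeral_eq_Suc ball_conj_distrib)
lemma c7c: "list_all (\<lambda>j. unitL 7 j \<in> set rootL7) [1..<Suc 7]" by code_simp
lemma c7d: "witOK 7 7 rootL7 tagL7" by code_simp

theorem lemma2p4:
  fixes n i :: nat and \<alpha> :: "nat \<Rightarrow> int"
  assumes "(n = 6 \<and> i = 1) \<or> (n = 7 \<and> i = 7)"
    and "\<alpha> \<in> rootsE n"
  shows "reflE n \<alpha> \<in> genW n ({1..n} - {i}) \<union>
           {u \<circ> sE n i \<circ> v | u v. u \<in> genW n ({1..n} - {i}) \<and> v \<in> genW n ({1..n} - {i})}"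
  using assms(1)
proof
  assume h: "n = 6 \<and> i = 1"
  then have n: "n = 6" and i: "i = 1" by auto
  show ?thesis unfolding n i
    by (rule main_gen[OF c6a[folded len_iff] c6b[folded closed_iff] c6c[folded units_iff]
      witOK_imp[OF c6d] assms(2)[unfolded n]])
next
  assume h: "n = 7 \<and> i = 7"
  then have n: "n = 7" and i: "i = 7" by auto
  show ?thesis unfolding n i
    by (rule main_gen[OF c7a[folded len_iff] c7b[folded closed_iff] c7c[folded units_iff]
      witOK_imp[OF c7d] assms(2)[unfolded n]])
qed

end
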